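(* Let $X$ and $Y$ be uncertain variables on a common set $\Omega$ with finite ranges $[\![X]\!]$ and $[\![Y]\!]$. Then $$\mathcal{L}_\star(X\rightarrow Y)\leq \sup_{P}\ \widetilde{\mathcal{L}}_P(X\rightarrow Y)+H_0(X\mid Y),$$ where the supremum is over all conditional probability mass functions $P=(P(y\mid x))_{x\in[\![X]\!],\,y\in[\![Y]\!]}$ (i.e., $P(y\mid x)\ge 0$ and $\sum_{y\in[\![Y]\!]}P(y\mid x)=1$ for each $x$), and $\widetilde{\mathcal{L}}_P(X\rightarrow Y):=\log_2\Big(\sum_{y\in[\![Y]\!]}\max_{x\in[\![X]\!]}P(y\mid x)\Big)$ is the maximal stochastic leakage of the channel $P$.
   Context: Let $\Omega$ be a set. An uncertain variable (uv) is a map $X:\Omega\to\mathbb{X}$ into some set; all uvs considered have finite ranges. The range of $X$ is $[\![X]\!]:=\{X(\omega):\omega\in\Omega\}$; the conditional range is $[\![X\mid Y(\omega)=y]\!]:=\{X(\omega):\omega\in\Omega,\ Y(\omega)=y\}$. Conditional non-stochastic entropy: $H_0(X\mid Y):=\max_{y\in[\![Y]\!]}\log_2|[\![X\mid Y(\omega)=y]\!]|$. The non-stochastic brute-force guessing leakage from a uv $U$ to a uv $Y$ is $$\mathcal{L}(U\rightarrow Y):=\log_2\left(\frac{|[\![U]\!]|}{\min_{y\in[\![Y]\!]}|[\![U\mid Y(\omega)=y]\!]|}\right).$$ The maximal non-stochastic brute-force leakage from $X$ to $Y$ is $$\mathcal{L}_\star(X\rightarrow Y):=\sup_{g}\ \mathcal{L}(g\circ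 X\rightarrow Y),$$ where the supremum ranges over all finite sets $\mathcal{U}$ and all functions $g:[\![X]\!]\to\mathcal{U}$. *)

theory Defs
  imports Complex_Main
begin

text \<open>Omega is modelled as the universe of a type 'o; uncertain variables are maps
  X :: 'o => 'x.  The range [[X]] is the library's range X = X ` UNIV.\<close>

definition cond_range :: "('o \<Rightarrow> 'a) \<Rightarrow> ('o \<Rightarrow> 'b) \<Rightarrow> 'b \<Rightarrow> 'a set" where
  "cond_range X Y y = {X w | w. Y w = y}"

definition H0_cond :: "('o \<Rightarrow> 'a) \<Rightarrow> ('o \<Rightarrow> 'b) \<Rightarrow> real" where
  "H0_cond X Y = Max ((\<lambda>y. log 2 (real (card (cond_range X Y y)))) ` range Y)"

definition nsbf_leakage :: "('o \<Rightarrow> 'u) \<Rightarrow> ('o \<Rightarrow> 'b) \<Rightarrow> real" where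
  "nsbf_leakage U Y =
     log 2 (real (card (range U)) / real (Min ((\<lambda>y. card (cond_range U Y y)) ` range Y)))"

text \<open>Since the leakage is invariant under injective relabelling of the codomain and any
  finite set injects into nat, the codomain is taken to be nat.\<close>

definition max_nsbf_leakage :: "('o \<Rightarrow> 'a) \<Rightarrow> ('o \<Rightarrow> 'b) \<Rightarrow> real" where
  "max_nsbf_leakage X Y = (SUP g :: 'a \<Rightarrow> nat. nsbf_leakage (g \<circ> X) Y)"

text \<open>Conditional pmfs P(y|x) = P x y on [[X]] x [[Y]].\<close>

definition channels :: "('o \<Rightarrow> 'a) \<Rightarrow> ('o \<Rightarrow> 'b) \<Rightarrow> ('a \<Rightarrow> 'b \<Rightarrow> real) set" where
  "channels X Y = {P. \<forall>x\<in>range X. (\<forall>y\<in>range Y. P x y \<ge> 0) \<and> (\<Sum>y\<in>range Y. P x y) = 1}"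

definition max_stoch_leakage ::
  "('o \<Rightarrow> 'a) \<Rightarrow> ('o \<Rightarrow> 'b) \<Rightarrow> ('a \<Rightarrow> 'b \<Rightarrow> real) \<Rightarrow> real" where
  "max_stoch_leakage X Y P = log 2 (\<Sum>y\<in>range Y. Max ((\<lambda>x. P x y) ` range X))"

end

theory Submission
  imports Defs
begin

lemma cond_range_sub: "cond_range X Y y \<subseteq> range X"
  unfolding cond_range_def by auto

lemma cond_range_ne: "y \<in> range Y \<Longrightarrow> cond_range X Y y \<noteq> {}"
  unfolding cond_range_def by auto

lemma logmono: "0 < (x::real) \<Longrightarrow> x \<le> y \<Longrightarrow> log 2 x \<le> log 2 y"
  by (subst log_le_cancel_iff) auto

lemma ex_max:
  fixes f :: "'b \<Rightarrow> nat"
  assumes "finite A" "a0 \<in> A" shows "\<exists>a\<in>A. \<forall>b\<in>A. f b \<le> f a"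
proof -
  have "Max (f ` A) \<in> f ` A" using assms by (intro Max_in) auto
  then obtain a where a: "a \<in> A" "f a = Max (f ` A)" by (auto simp del: Max_in)
  have "\<forall>b\<in>A. f b \<le> f a" using a(2) assms(1) by auto
  with a(1) show ?thesis by blast
qed

lemma div_le_self_r: "0 \<le> (a::real) \<Longrightarrow> 1 \<le> m \<Longrightarrow> a / m \<le> a"
  using mult_left_mono[of 1 m a] by (simp add: divide_le_eq)

lemma stoch_bound:
  fixes X :: "'o \<Rightarrow> 'a" and Y :: "'o \<Rightarrow> 'b"
  assumes fx: "finite (range X)" and fy: "finite (range Y)" and P: "P \<in> channels X Y"
  shows "max_stoch_leakage X Y P \<le> log 2 (real (card (range Y)))"
proof -
  obtain x0 where x0: "x0 \<in> range X" by auto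
  have le1: "Max ((\<lambda>x. P x y) ` range X) \<le> 1" if y: "y \<in> range Y" for y
  proof (subst Max_le_iff)
    show "finite ((\<lambda>x. P x y) ` range X)" using fx by auto
    show "(\<lambda>x. P x y) ` range X \<noteq> {}" by auto
    show "\<forall>a\<in>(\<lambda>x. P x y) ` range X. a \<le> 1"
    proof
      fix a assume "a \<in> (\<lambda>x. P x y) ` range X"
      then obtain x where x: "x \<in> range X" and a: "a = P x y" by auto
      have nn: "\<forall>y\<in>range Y. P x y \<ge> 0" and s: "(\<Sum>y\<in>range Y. P x y) = 1"
        using P x unfolding channels_def by auto
      have "P x y \<le> (\<Sum>y\<in>range Y. P x y)"
        using member_le_sum[OF y, of "P x"] nn fy by auto
      then show "a \<le> 1" using a s by simp
    qed
  qed
  have ge: "Max ((\<lambda>x. P x y) ` range X) \<ge> P x0 y" for y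
    using fx x0 by (intro Max_ge) auto
  have "1 = (\<Sum>y\<in>range Y. P x0 y)" using P x0 unfolding channels_def by auto
  also have "\<dots> \<le> (\<Sum>y\<in>range Y. Max ((\<lambda>x. P x y) ` range X))"
    by (intro sum_mono ge)
  finally have pos: "0 < (\<Sum>y\<in>range Y. Max ((\<lambda>x. P x y) ` range X))" by simp
  have "(\<Sum>y\<in>range Y. Max ((\<lambda>x. P x y) ` range X)) \<le> (\<Sum>y\<in>range Y. 1)"
    by (intro sum_mono le1)
  then have "(\<Sum>y\<in>range Y. Max ((\<lambda>x. P x y) ` range X)) \<le> real (card (range Y))" by simp
  then show ?thesis unfolding max_stoch_leakage_def by (rule logmono[OF pos])
qed

theorem proposition6:
  fixes X :: "'o \<Rightarrow> 'a" and Y :: "'o \<Rightarrow> 'b"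
  assumes "finite (range X)" and "finite (range Y)"
  shows "max_nsbf_leakage X Y
           \<le> (SUP P\<in>channels X Y. max_stoch_leakage X Y P) + H0_cond X Y"
proof -
  note fx = assms(1) and fy = assms(2)
  define h where "h x = Y (SOME w. X w = x)" for x
  have hin: "x \<in> cond_range X Y (h x)" if "x \<in> range X" for x
  proof -
    from that obtain w where "X w = x" by blast
    then have e: "X (SOME w. X w = x) = x" by (rule someI)
    show ?thesis unfolding cond_range_def h_def
      by (rule CollectI, rule exI[of _ "SOME w. X w = x"]) (simp add: e)
  qed
  have hY: "h x \<in> range Y" for x unfolding h_def by (rule rangeI)
  define P where "P x y = (if y = h x then 1 else 0 :: real)" for x y
  have Pch: "P \<in> channels X Y"
    unfolding channels_def P_def using fy hY by (auto simp: sum.delta)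
  define k where "k = card (h ` range X)"
  have Maxeq: "Max ((\<lambda>x. P x y) ` range X) = (if y \<in> h ` range X then 1 else 0)" for y
  proof (cases "y \<in> h ` range X")
    case True
    then have "(\<lambda>x. P x y) ` range X = {1} \<or> (\<lambda>x. P x y) ` range X = {0,1}"
      unfolding P_def by auto
    then show ?thesis using True by auto
  next
    case False
    then have "(\<lambda>x. P x y) ` range X = (\<lambda>x. 0) ` range X" unfolding P_def
      by (intro image_cong) auto
    also have "\<dots> = {0}" by auto
    finally have "(\<lambda>x. P x y) ` range X = {0}" .
    then show ?thesis using False by auto
  qed
  have "(\<Sum>y\<in>range Y. Max ((\<lambda>x. P x y) ` range X)) = (\<Sum>y\<in>range Y. if y \<in> h ` range X then 1 else 0)"
    using Maxeq by simp
  also have "\<dots> = real (card (range Y \<inter> h ` range X))"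
    using fy by (simp add: sum.If_cases)
  also have "range Y \<inter> h ` range X = h ` range X" using hY by auto
  finally have stoch: "max_stoch_leakage X Y P = log 2 (real k)"
    unfolding max_stoch_leakage_def k_def by simp
  define c where "c y = card (cond_range X Y y)" for y
  obtain y0 where y0: "y0 \<in> range Y" and y0max: "\<And>y. y \<in> range Y \<Longrightarrow> c y \<le> c y0"
    using ex_max[OF fy rangeI, of c] by blast
  have c0pos: "c y0 \<ge> 1"
    using cond_range_ne[OF y0, of X] finite_subset[OF cond_range_sub fx] unfolding c_def
    by (simp add: Suc_le_eq card_gt_0_iff)
  have H0: "log 2 (real (c y0)) \<le> H0_cond X Y"
    unfolding H0_cond_def c_def using fy y0 by (intro Max_ge) auto
  have "card (range X) \<le> card (\<Union>y\<in>h ` range X. {x\<in>range X. h x = y})"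
    by (rule card_mono[OF finite_subset[OF _ fx]]) auto
  also have "\<dots> \<le> (\<Sum>y\<in>h ` range X. card {x\<in>range X. h x = y})"
    by (rule card_UN_le) (use fx in simp)
  also have "\<dots> \<le> (\<Sum>y\<in>h ` range X. c y0)"
  proof (intro sum_mono)
    fix y assume y: "y \<in> h ` range X"
    have "{x\<in>range X. h x = y} \<subseteq> cond_range X Y y" using hin by auto
    then have "card {x\<in>range X. h x = y} \<le> c y"
      unfolding c_def using finite_subset[OF cond_range_sub fx] by (intro card_mono) auto
    also have "\<dots> \<le> c y0" using y hY y0max by auto
    finally show "card {x\<in>range X. h x = y} \<le> c y0" .
  qed
  also have "\<dots> = k * c y0" unfolding k_def by simp
  finally have cardX: "card (range X) \<le> k * c y0" .
  have kpos: "k \<ge> 1" unfolding k_def using fx by (simp add: Suc_le_eq card_gt_0_iff)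
  have logX: "log 2 (real (card (range X))) \<le> log 2 (real k) + log 2 (real (c y0))"
  proof -
    have "card (range X) \<ge> 1" using fx by (simp add: Suc_le_eq card_gt_0_iff)
    then have "log 2 (real (card (range X))) \<le> log 2 (real (k * c y0))"
      using cardX by (intro logmono) (auto simp del: of_nat_mult simp add: of_nat_mult[symmetric])
    also have "\<dots> = log 2 (real k) + log 2 (real (c y0))"
      using kpos c0pos by (simp add: log_mult)
    finally show ?thesis .
  qed
  have bdd: "bdd_above ((\<lambda>P. max_stoch_leakage X Y P) ` channels X Y)"
    using stoch_bound[OF fx fy] by (intro bdd_aboveI[where M = "log 2 (real (card (range Y)))"]) auto
  have sup: "log 2 (real k) \<le> (SUP P\<in>channels X Y. max_stoch_leakage X Y P)"
    using cSUP_upper[OF Pch bdd] stoch by simp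
  show ?thesis
    unfolding max_nsbf_leakage_def
  proof (intro cSUP_least)
    show "(UNIV :: ('a \<Rightarrow> nat) set) \<noteq> {}" by simp
    fix g :: "'a \<Rightarrow> nat"
    let ?U = "g \<circ> X"
    have fU: "finite (range ?U)" unfolding image_comp[symmetric] using fx by simp
    have cU: "card (range ?U) \<le> card (range X)" unfolding image_comp[symmetric] using fx by (rule card_image_le)
    have Upos: "card (range ?U) \<ge> 1" using fU by (simp add: Suc_le_eq card_gt_0_iff)
    have mpos: "Min ((\<lambda>y. card (cond_range ?U Y y)) ` range Y) \<ge> 1"
    proof (subst Min_ge_iff)
      show "finite ((\<lambda>y. card (cond_range ?U Y y)) ` range Y)" using fy by simp
      show "(\<lambda>y. card (cond_range ?U Y y)) ` range Y \<noteq> {}" by simp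
      show "\<forall>a\<in>(\<lambda>y. card (cond_range ?U Y y)) ` range Y. 1 \<le> a"
      proof
        fix a assume "a \<in> (\<lambda>y. card (cond_range ?U Y y)) ` range Y"
        then obtain y where y: "y \<in> range Y" and a: "a = card (cond_range ?U Y y)" by blast
        have ne: "cond_range ?U Y y \<noteq> {}" by (rule cond_range_ne[OF y])
        have fin: "finite (cond_range ?U Y y)" by (rule finite_subset[OF cond_range_sub fU])
        show "1 \<le> a" unfolding a using ne fin by (simp add: Suc_le_eq card_gt_0_iff)
      qed
    qed
    define m where "m = Min ((\<lambda>y. card (cond_range ?U Y y)) ` range Y)"
    have "real (card (range ?U)) / real m \<le> real (card (range ?U))"
      using mpos[folded m_def] div_le_self_r[of "real (card (range ?U))" "real m"] by simp
    also have "\<dots> \<le> real (card (range X))" using cU by simp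
    finally have r: "real (card (range ?U)) / real m \<le> real (card (range X))" .
    have "real (card (range ?U)) / real m > 0" using Upos mpos unfolding m_def by simp
    then have "nsbf_leakage ?U Y \<le> log 2 (real (card (range X)))"
      unfolding nsbf_leakage_def m_def[symmetric] using r by (intro logmono)
    then show "nsbf_leakage ?U Y \<le> (SUP P\<in>channels X Y. max_stoch_leakage X Y P) + H0_cond X Y"
      using logX sup H0 by linarith
  qed
qed

end
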